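(* The restriction of the projection $\pi:R\to R(F,H)$, $u\mapsto u^\eta$, to the center $Z(R)$ is an algebra isomorphism of $Z(R)$ onto its image $W(F,H)=\pi(Z(R))\subseteq R(F,H)$.
   Context: Let $f\in\mathbb{C}[H]$ be a polynomial. $R=R(f)$ is the associative $\mathbb{C}$-algebra generated by $E,F,H$ with relations $EF-FE=f(H)$, $HE-EH=E$, $HF-FH=-F$; the monomials $F^iH^jE^k$ form a basis of $R$. Let $R(E)=\mathbb{C}[E]$ and $R(F,H)$ the subalgebra generated by $F,H$ (with basis $F^iH^j$). Let $u\in\mathbb{C}[H]$ satisfy $f(H)=\tfrac12(u(H+1)-u(H))$ and $\Omega=2FE+u(H+1)$; the center $Z(R)$ is the polynomial ring $\mathbb{C}[\Omega]$. Fix an algebra homomorphism $\eta:R(E)\to\mathbb{C}$ with $\eta(E)\neq0$ and let $R_\eta(E)=\ker\eta$. Then $R=R(F,H)\oplus R\,R_\eta(E)$ as vector spaces; for $u\in R$, $u^\eta=\pi(u)$ denotes its $R(F,H)$-component. *)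

theory Defs
  imports "HOL-Computational_Algebra.Polynomial"
begin

text \<open>A unital associative complex algebra is modelled as a ring 'a together with
 a ring homomorphism sc from the complex numbers into the centre of 'a
 (scalar multiplication c.x is sc c * x).\<close>

definition complex_alg :: "(complex \<Rightarrow> 'a::ring_1) \<Rightarrow> bool" where
  "complex_alg sc \<longleftrightarrow>
     sc 0 = 0 \<and> sc 1 = 1 \<and>
     (\<forall>a b. sc (a + b) = sc a + sc b) \<and>
     (\<forall>a b. sc (a * b) = sc a * sc b) \<and>
     (\<forall>a x. sc a * x = x * sc a)"

definition peval :: "(complex \<Rightarrow> 'a::ring_1) \<Rightarrow> complex poly \<Rightarrow> 'a \<Rightarrow> 'a" where
  "peval sc p x = (\<Sum>i\<le>degree p. sc (coeff p i) * x ^ i)"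

text \<open>R(f): the algebra generated by E, F, H with EF-FE = f(H), HE-EH = E, HF-FH = -F,
 in which the monomials F^i H^j E^k form a basis (every element is a unique finite
 linear combination of them).\<close>
definition is_R_alg ::
  "(complex \<Rightarrow> 'a::ring_1) \<Rightarrow> complex poly \<Rightarrow> 'a \<Rightarrow> 'a \<Rightarrow> 'a \<Rightarrow> bool" where
  "is_R_alg sc f E F H \<longleftrightarrow>
     complex_alg sc \<and>
     E * F - F * E = peval sc f H \<and>
     H * E - E * H = E \<and>
     H * F - F * H = - F \<and>
     (\<forall>x. \<exists>!c :: nat \<times> nat \<times> nat \<Rightarrow> complex.
         finite {m. c m \<noteq> 0} \<and>
         x = (\<Sum>m\<in>{m. c m \<noteq> 0}.
                 (case m of (i, j, k) \<Rightarrow> sc (c m) * F ^ i * H ^ j * E ^ k)))"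

definition center :: "'a::ring_1 set" where
  "center = {z. \<forall>x. z * x = x * z}"

definition RFH :: "(complex \<Rightarrow> 'a::ring_1) \<Rightarrow> 'a \<Rightarrow> 'a \<Rightarrow> 'a set" where
  "RFH sc F H = {x. \<exists>c :: nat \<times> nat \<Rightarrow> complex. finite {m. c m \<noteq> 0} \<and>
      x = (\<Sum>m\<in>{m. c m \<noteq> 0}. (case m of (i, j) \<Rightarrow> sc (c m) * F ^ i * H ^ j))}"

text \<open>R_eta(E) = ker eta, where eta : C[E] -> C is the algebra homomorphism with
 eta(E) = e, i.e. eta(q(E)) = q(e).\<close>
definition R_eta :: "(complex \<Rightarrow> 'a::ring_1) \<Rightarrow> 'a \<Rightarrow> complex \<Rightarrow> 'a set" where
  "R_eta sc E e = {peval sc q E | q. poly q e = 0}"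

definition R_Reta :: "(complex \<Rightarrow> 'a::ring_1) \<Rightarrow> 'a \<Rightarrow> complex \<Rightarrow> 'a set" where
  "R_Reta sc E e = {(\<Sum>i<n. r i * p i) | (n::nat) r p. \<forall>i<n. p i \<in> R_eta sc E e}"

text \<open>The projection u |-> u^eta onto the R(F,H)-component of R = R(F,H) + R R_eta(E).\<close>
definition eta_proj ::
  "(complex \<Rightarrow> 'a::ring_1) \<Rightarrow> 'a \<Rightarrow> 'a \<Rightarrow> 'a \<Rightarrow> complex \<Rightarrow> 'a \<Rightarrow> 'a" where
  "eta_proj sc E F H e u = (THE v. v \<in> RFH sc F H \<and> u - v \<in> R_Reta sc E e)"

end

theory Submission
  imports Defs
begin

locale Ralg =
  fixes sc :: "complex \<Rightarrow> 'a::ring_1" and f :: "complex poly" and E F H :: 'a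
  assumes R: "is_R_alg sc f E F H"
begin

lemma CA: "complex_alg sc" using R by (simp add: is_R_alg_def)
lemma sc0[simp]: "sc 0 = 0" using CA unfolding complex_alg_def by blast
lemma sc1[simp]: "sc 1 = 1" using CA unfolding complex_alg_def by blast
lemma sc_add: "sc (a + b) = sc a + sc b" using CA unfolding complex_alg_def by blast
lemma sc_mult: "sc (a * b) = sc a * sc b" using CA unfolding complex_alg_def by blast
lemma sc_comm: "sc a * x = x * sc a" using CA unfolding complex_alg_def by blast
lemma sc_minus: "sc (- a) = - sc a"
proof -
  have "sc a + sc (-a) = 0" using sc_add[of a "-a"] by simp
  thus ?thesis by (metis minus_unique)
qed
lemma sc_diff: "sc (a - b) = sc a - sc b"
  using sc_add[of a "-b"] sc_minus[of b] by simp
lemma sc_of_nat: "sc (of_nat n) = of_nat n"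
  by (induct n) (simp_all add: sc_add)
lemma sc_power: "sc (a ^ n) = sc a ^ n"
  by (induct n) (simp_all add: sc_mult)
lemma sc_sum: "finite I \<Longrightarrow> sc (\<Sum>i\<in>I. g i) = (\<Sum>i\<in>I. sc (g i))"
  by (induct I rule: finite_induct) (simp_all add: sc_add)
lemma sc_left: "x * (sc a * y) = sc a * (x * y)"
  by (simp add: mult.assoc[symmetric] sc_comm[of a x])
lemma sc_assoc: "sc a * (x * y) = x * (sc a * y)"
  by (simp add: mult.assoc[symmetric] sc_comm[of a x])

definition mon :: "nat \<times> nat \<times> nat \<Rightarrow> 'a" where
  "mon m = (case m of (i, j, k) \<Rightarrow> F ^ i * H ^ j * E ^ k)"
definition mon2 :: "nat \<times> nat \<Rightarrow> 'a" where
  "mon2 m = (case m of (i, j) \<Rightarrow> F ^ i * H ^ j)"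

lemma case3: "(case m of (i, j, k) \<Rightarrow> sc (c m) * F ^ i * H ^ j * E ^ k) = sc (c m) * mon m"
  by (cases m) (simp add: mon_def mult.assoc)
lemma case2: "(case m of (i, j) \<Rightarrow> sc (c m) * F ^ i * H ^ j) = sc (c m) * mon2 m"
  by (cases m) (simp add: mon2_def mult.assoc)

lemma ext_sum:
  assumes "finite S" "{m. a m \<noteq> 0} \<subseteq> S"
  shows "(\<Sum>m\<in>{m. a m \<noteq> 0}. sc (a m) * g m) = (\<Sum>m\<in>S. sc (a m) * g m)"
  by (rule sum.mono_neutral_left) (use assms in auto)

lemma basis: "\<exists>!c. finite {m. c m \<noteq> 0} \<and> x = (\<Sum>m\<in>{m. c m \<noteq> 0}. sc (c m) * mon m)"
  using R unfolding is_R_alg_def case3 by blast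

definition coef :: "'a \<Rightarrow> nat \<times> nat \<times> nat \<Rightarrow> complex" where
  "coef x = (THE c. finite {m. c m \<noteq> 0} \<and> x = (\<Sum>m\<in>{m. c m \<noteq> 0}. sc (c m) * mon m))"

lemma coef_rep: "finite {m. coef x m \<noteq> 0} \<and> x = (\<Sum>m\<in>{m. coef x m \<noteq> 0}. sc (coef x m) * mon m)"
  unfolding coef_def by (rule theI'[OF basis])

lemma coef_fin: "finite {m. coef x m \<noteq> 0}" using coef_rep by blast

lemma coef_sum: "(\<Sum>m\<in>{m. coef x m \<noteq> 0}. sc (coef x m) * mon m) = x"
proof -
  have "x = (\<Sum>m\<in>{m. coef x m \<noteq> 0}. sc (coef x m) * mon m)" by (rule conjunct2[OF coef_rep])
  thus ?thesis by (rule sym)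
qed

lemma coef_sumS:
  assumes "finite S" "{m. coef x m \<noteq> 0} \<subseteq> S"
  shows "(\<Sum>m\<in>S. sc (coef x m) * mon m) = x"
proof -
  have "(\<Sum>m\<in>S. sc (coef x m) * mon m) = (\<Sum>m\<in>{m. coef x m \<noteq> 0}. sc (coef x m) * mon m)"
    by (rule sym, rule ext_sum[OF assms])
  also have "\<dots> = x" by (rule coef_sum)
  finally show ?thesis .
qed

lemma coef_unique:
  assumes "finite S" "{m. a m \<noteq> 0} \<subseteq> S" "x = (\<Sum>m\<in>S. sc (a m) * mon m)"
  shows "coef x = a"
proof -
  have "finite {m. a m \<noteq> 0}" using assms finite_subset by blast
  moreover have "x = (\<Sum>m\<in>{m. a m \<noteq> 0}. sc (a m) * mon m)" using assms(3) ext_sum[OF assms(1,2), where g=mon] by simp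
  ultimately show ?thesis unfolding coef_def by (intro the1_equality[OF basis]) auto
qed

lemma coef_add: "coef (x + y) = (\<lambda>m. coef x m + coef y m)"
proof -
  let ?S = "{m. coef x m \<noteq> 0} \<union> {m. coef y m \<noteq> 0}"
  have fS: "finite ?S" using coef_fin by simp
  have sub1: "{m. coef x m \<noteq> 0} \<subseteq> ?S" and sub2: "{m. coef y m \<noteq> 0} \<subseteq> ?S" by blast+
  have "x + y = (\<Sum>m\<in>?S. sc (coef x m) * mon m) + (\<Sum>m\<in>?S. sc (coef y m) * mon m)"
    by (simp only: coef_sumS[OF fS sub1] coef_sumS[OF fS sub2])
  also have "\<dots> = (\<Sum>m\<in>?S. sc (coef x m + coef y m) * mon m)"
    by (simp add: sc_add distrib_right sum.distrib)
  finally have eq: "x + y = (\<Sum>m\<in>?S. sc (coef x m + coef y m) * mon m)" .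
  show ?thesis by (rule coef_unique[OF fS _ eq]) auto
qed

lemma coef_scale: "coef (sc a * x) = (\<lambda>m. a * coef x m)"
proof -
  let ?S = "{m. coef x m \<noteq> 0}"
  have "sc a * x = sc a * (\<Sum>m\<in>?S. sc (coef x m) * mon m)"
    by (simp only: coef_sum)
  also have "\<dots> = (\<Sum>m\<in>?S. sc (a * coef x m) * mon m)"
    by (simp add: sc_mult sum_distrib_left mult.assoc)
  finally have eq: "sc a * x = (\<Sum>m\<in>?S. sc (a * coef x m) * mon m)" .
  show ?thesis by (rule coef_unique[OF coef_fin _ eq]) auto
qed

lemma coef_mon: "coef (mon m0) = (\<lambda>m. if m = m0 then 1 else 0)"
  by (rule coef_unique[of "{m0}"]) auto

lemma coef_zero: "coef 0 = (\<lambda>m. 0)"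
  by (rule coef_unique[of "{}"]) auto


definition ev :: "complex \<Rightarrow> nat \<times> nat \<times> nat \<Rightarrow> 'a" where
  "ev e m = (case m of (i, j, k) \<Rightarrow> sc (e ^ k) * F ^ i * H ^ j)"
definition phi :: "complex \<Rightarrow> 'a \<Rightarrow> 'a" where
  "phi e x = (\<Sum>m\<in>{m. coef x m \<noteq> 0}. sc (coef x m) * ev e m)"

lemma phiS: "finite S \<Longrightarrow> {m. coef x m \<noteq> 0} \<subseteq> S \<Longrightarrow> phi e x = (\<Sum>m\<in>S. sc (coef x m) * ev e m)"
  unfolding phi_def by (rule ext_sum)

lemma phi_add: "phi e (x + y) = phi e x + phi e y"
proof -
  let ?S = "{m. coef x m \<noteq> 0} \<union> {m. coef y m \<noteq> 0}"
  have fS: "finite ?S" using coef_fin by simp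
  have "phi e (x + y) = (\<Sum>m\<in>?S. sc (coef (x + y) m) * ev e m)"
    by (rule phiS[OF fS]) (auto simp: coef_add)
  also have "\<dots> = (\<Sum>m\<in>?S. sc (coef x m) * ev e m) + (\<Sum>m\<in>?S. sc (coef y m) * ev e m)"
    by (simp add: coef_add sc_add distrib_right sum.distrib)
  also have "\<dots> = phi e x + phi e y"
  proof -
    have sub1: "{m. coef x m \<noteq> 0} \<subseteq> ?S" and sub2: "{m. coef y m \<noteq> 0} \<subseteq> ?S" by blast+
    show ?thesis by (simp only: phiS[OF fS sub1] phiS[OF fS sub2])
  qed
  finally show ?thesis .
qed

lemma phi_scale: "phi e (sc a * x) = sc a * phi e x"
proof -
  let ?S = "{m. coef x m \<noteq> 0}"
  have "phi e (sc a * x) = (\<Sum>m\<in>?S. sc (coef (sc a * x) m) * ev e m)"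
    by (rule phiS[OF coef_fin]) (auto simp: coef_scale)
  also have "\<dots> = sc a * phi e x"
    by (simp add: coef_scale phi_def sc_mult sum_distrib_left mult.assoc)
  finally show ?thesis .
qed

lemma phi_zero: "phi e 0 = 0"
  by (simp add: phi_def coef_zero)

lemma phi_diff: "phi e (x - y) = phi e x - phi e y"
proof -
  have "phi e (x - y) = phi e (x + sc (-1) * y)" by (simp add: sc_minus)
  also have "\<dots> = phi e x + sc (-1) * phi e y" by (simp only: phi_add phi_scale)
  also have "\<dots> = phi e x - phi e y" by (simp add: sc_minus)
  finally show ?thesis .
qed

lemma phi_sum: "finite I \<Longrightarrow> phi e (\<Sum>i\<in>I. g i) = (\<Sum>i\<in>I. phi e (g i))"
  by (induct I rule: finite_induct) (simp_all add: phi_zero phi_add)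

lemma phi_mon: "phi e (mon m) = ev e m"
  by (simp add: phi_def coef_mon)

lemma phi_lin: "finite S \<Longrightarrow> phi e (\<Sum>m\<in>S. sc (a m) * mon (g m)) = (\<Sum>m\<in>S. sc (a m) * ev e (g m))"
  by (simp add: phi_sum phi_scale phi_mon)

lemma phi_rE: "phi e (x * E ^ l) = sc (e ^ l) * phi e x"
proof -
  let ?S = "{m. coef x m \<noteq> 0}"
  define sh where "sh = (\<lambda>m::nat \<times> nat \<times> nat. case m of (i, j, k) \<Rightarrow> (i, j, k + l))"
  have msh: "mon m * E ^ l = mon (sh m)" for m
    by (cases m) (simp add: mon_def sh_def power_add mult.assoc)
  have pw: "sc (e ^ (k + l)) = sc (e ^ l) * sc (e ^ k)" for k
  proof -
    have "sc (e ^ (k + l)) = sc (e ^ l * e ^ k)" by (simp only: power_add mult.commute)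
    also have "\<dots> = sc (e ^ l) * sc (e ^ k)" by (rule sc_mult)
    finally show ?thesis .
  qed
  have esh: "ev e (sh m) = sc (e ^ l) * ev e m" for m
    by (cases m) (simp add: ev_def sh_def pw mult.assoc)
  have "x * E ^ l = (\<Sum>m\<in>?S. sc (coef x m) * mon m) * E ^ l"
    by (simp only: coef_sum)
  also have "\<dots> = (\<Sum>m\<in>?S. sc (coef x m) * mon (sh m))"
    by (simp add: sum_distrib_right mult.assoc msh)
  finally have "phi e (x * E ^ l) = (\<Sum>m\<in>?S. sc (coef x m) * ev e (sh m))"
    using phi_lin[OF coef_fin] by simp
  also have "\<dots> = sc (e ^ l) * phi e x"
    by (simp add: esh phi_def sum_distrib_left mult.assoc[symmetric] sc_mult[symmetric] mult.commute)
  finally show ?thesis .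
qed


lemma peval_le: "degree p \<le> n \<Longrightarrow> peval sc p x = (\<Sum>i\<le>n. sc (coeff p i) * x ^ i)"
  unfolding peval_def by (rule sum.mono_neutral_left) (auto simp: coeff_eq_0)

lemma phi_peval: "phi e (x * peval sc q E) = sc (poly q e) * phi e x"
proof -
  have "x * peval sc q E = (\<Sum>l\<le>degree q. sc (coeff q l) * (x * E ^ l))"
    by (simp only: peval_def sum_distrib_left sc_left)
  hence "phi e (x * peval sc q E) = (\<Sum>l\<le>degree q. sc (coeff q l) * (sc (e ^ l) * phi e x))"
    by (simp add: phi_sum phi_scale phi_rE)
  also have "\<dots> = sc (poly q e) * phi e x"
    by (simp add: poly_altdef sc_sum sum_distrib_right sc_mult sc_power mult.assoc)
  finally show ?thesis .
qed

lemma Reta_0: "0 \<in> R_Reta sc E e"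
  unfolding R_Reta_def by (rule CollectI, rule exI[of _ 0]) auto

lemma Reta_add1:
  assumes a: "a \<in> R_Reta sc E e" and p: "p \<in> R_eta sc E e"
  shows "a + r * p \<in> R_Reta sc E e"
proof -
  obtain n :: nat and rr pp where a: "a = (\<Sum>i<n. rr i * pp i)" and pp: "\<forall>i<n. pp i \<in> R_eta sc E e"
    using a unfolding R_Reta_def by blast
  have "a + r * p = (\<Sum>i<Suc n. (rr(n := r)) i * (pp(n := p)) i)"
    by (simp add: a)
  moreover have "\<forall>i<Suc n. (pp(n := p)) i \<in> R_eta sc E e" using pp p by auto
  ultimately show ?thesis unfolding R_Reta_def by blast
qed

lemma Reta_add:
  assumes a: "a \<in> R_Reta sc E e" and b: "b \<in> R_Reta sc E e"
  shows "a + b \<in> R_Reta sc E e"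
proof -
  obtain n :: nat and rr pp where b: "b = (\<Sum>i<n. rr i * pp i)" and pp: "\<forall>i<n. pp i \<in> R_eta sc E e"
    using b unfolding R_Reta_def by blast
  have "\<forall>m\<le>n. a + (\<Sum>i<m. rr i * pp i) \<in> R_Reta sc E e"
  proof (intro allI impI)
    fix m assume "m \<le> n" thus "a + (\<Sum>i<m. rr i * pp i) \<in> R_Reta sc E e"
    proof (induct m)
      case 0 thus ?case using a by simp
    next
      case (Suc m)
      hence "a + (\<Sum>i<m. rr i * pp i) + rr m * pp m \<in> R_Reta sc E e"
        using pp by (intro Reta_add1) auto
      thus ?case by (simp add: add.assoc)
    qed
  qed
  thus ?thesis using b by simp
qed

lemma Reta_lmult:
  assumes a: "a \<in> R_Reta sc E e" shows "r * a \<in> R_Reta sc E e"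
proof -
  obtain n :: nat and rr pp where a: "a = (\<Sum>i<n. rr i * pp i)" and pp: "\<forall>i<n. pp i \<in> R_eta sc E e"
    using a unfolding R_Reta_def by blast
  have eq: "r * a = (\<Sum>i<n. (r * rr i) * pp i)" by (simp add: a sum_distrib_left mult.assoc)
  show ?thesis unfolding R_Reta_def mem_Collect_eq
    by (rule exI[of _ n], rule exI[of _ "\<lambda>i. r * rr i"], rule exI[of _ pp]) (use eq pp in simp)
qed

lemma Reta_diff:
  assumes a: "a \<in> R_Reta sc E e" and b: "b \<in> R_Reta sc E e"
  shows "a - b \<in> R_Reta sc E e"
  using Reta_add[OF a Reta_lmult[OF b, of "-1"]] by simp

lemma Reta_sum: "finite I \<Longrightarrow> (\<forall>i\<in>I. g i \<in> R_Reta sc E e) \<Longrightarrow> (\<Sum>i\<in>I. g i) \<in> R_Reta sc E e"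
  by (induct I rule: finite_induct) (simp_all add: Reta_0 Reta_add)

lemma phi_Reta:
  assumes a: "a \<in> R_Reta sc E e" shows "phi e a = 0"
proof -
  obtain n :: nat and rr pp where a: "a = (\<Sum>i<n. rr i * pp i)" and pp: "\<forall>i<n. pp i \<in> R_eta sc E e"
    using a unfolding R_Reta_def by blast
  have "phi e (rr i * pp i) = 0" if hi: "i < n" for i
  proof -
    have "pp i \<in> R_eta sc E e" using pp hi by blast
    then obtain q where "pp i = peval sc q E" "poly q e = 0" unfolding R_eta_def by blast
    thus ?thesis by (simp add: phi_peval)
  qed
  thus ?thesis by (simp add: a phi_sum)
qed

lemma RFH_lin: "finite S \<Longrightarrow> (\<Sum>m\<in>S. sc (d m) * mon2 m) \<in> RFH sc F H"
proof -
  assume fS: "finite S"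
  define d' where "d' = (\<lambda>m. if m \<in> S then d m else 0)"
  have sub: "{m. d' m \<noteq> 0} \<subseteq> S" by (auto simp: d'_def)
  hence fin: "finite {m. d' m \<noteq> 0}" using fS finite_subset by blast
  have "(\<Sum>m\<in>S. sc (d m) * mon2 m) = (\<Sum>m\<in>S. sc (d' m) * mon2 m)"
    by (rule sum.cong) (auto simp: d'_def)
  also have "\<dots> = (\<Sum>m\<in>{m. d' m \<noteq> 0}. sc (d' m) * mon2 m)"
    using ext_sum[OF fS sub] by simp
  finally show ?thesis unfolding RFH_def case2 using fin by blast
qed

lemma RFH_rep: "v \<in> RFH sc F H \<Longrightarrow> \<exists>S d. finite S \<and> v = (\<Sum>m\<in>S. sc (d m) * mon2 m)"
  unfolding RFH_def case2 by blast

lemma RFH_add: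
  assumes "v \<in> RFH sc F H" "w \<in> RFH sc F H" shows "v + w \<in> RFH sc F H"
proof -
  obtain d1 where d1: "finite {m. d1 m \<noteq> 0}" "v = (\<Sum>m\<in>{m. d1 m \<noteq> 0}. sc (d1 m) * mon2 m)"
    using assms(1) unfolding RFH_def case2 by blast
  obtain d2 where d2: "finite {m. d2 m \<noteq> 0}" "w = (\<Sum>m\<in>{m. d2 m \<noteq> 0}. sc (d2 m) * mon2 m)"
    using assms(2) unfolding RFH_def case2 by blast
  let ?S = "{m. d1 m \<noteq> 0} \<union> {m. d2 m \<noteq> 0}"
  have fS: "finite ?S" using d1 d2 by simp
  have "v + w = (\<Sum>m\<in>?S. sc (d1 m) * mon2 m) + (\<Sum>m\<in>?S. sc (d2 m) * mon2 m)"
  proof -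
    have sub1: "{m. d1 m \<noteq> 0} \<subseteq> ?S" and sub2: "{m. d2 m \<noteq> 0} \<subseteq> ?S" by blast+
    show ?thesis using d1(2) d2(2) ext_sum[OF fS sub1, where g=mon2] ext_sum[OF fS sub2, where g=mon2]
      by simp
  qed
  also have "\<dots> = (\<Sum>m\<in>?S. sc (d1 m + d2 m) * mon2 m)"
    by (simp add: sc_add distrib_right sum.distrib)
  finally show ?thesis using RFH_lin[OF fS] by simp
qed

lemma RFH_scale: "v \<in> RFH sc F H \<Longrightarrow> sc a * v \<in> RFH sc F H"
proof -
  assume "v \<in> RFH sc F H"
  then obtain S d where "finite S" "v = (\<Sum>m\<in>S. sc (d m) * mon2 m)" using RFH_rep by blast
  moreover have "sc a * (\<Sum>m\<in>S. sc (d m) * mon2 m) = (\<Sum>m\<in>S. sc (a * d m) * mon2 m)"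
    by (simp add: sum_distrib_left sc_mult mult.assoc)
  ultimately show ?thesis using RFH_lin by simp
qed

lemma RFH_0: "0 \<in> RFH sc F H" using RFH_lin[of "{}"] by simp

lemma RFH_sum: "finite I \<Longrightarrow> (\<forall>i\<in>I. g i \<in> RFH sc F H) \<Longrightarrow> (\<Sum>i\<in>I. g i) \<in> RFH sc F H"
  by (induct I rule: finite_induct) (simp_all add: RFH_0 RFH_add)

lemma RFH_mon2: "mon2 m \<in> RFH sc F H"
  using RFH_lin[of "{m}" "\<lambda>_. 1"] by simp

lemma mon2_mon: "mon2 (i, j) = mon (i, j, 0)" by (simp add: mon_def mon2_def)

lemma phi_mon2: "phi e (mon2 m) = mon2 m"
proof (cases m)
  case (Pair i j)
  have "phi e (mon2 m) = phi e (mon (i, j, 0))" by (simp only: Pair mon2_mon)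
  also have "\<dots> = ev e (i, j, 0)" by (rule phi_mon)
  also have "\<dots> = mon2 m" by (simp add: Pair ev_def mon2_def)
  finally show ?thesis .
qed

lemma phi_RFH: "v \<in> RFH sc F H \<Longrightarrow> phi e v = v"
proof -
  assume "v \<in> RFH sc F H"
  then obtain S d where "finite S" "v = (\<Sum>m\<in>S. sc (d m) * mon2 m)" using RFH_rep by blast
  thus ?thesis by (simp add: phi_sum phi_scale phi_mon2)
qed

lemma ev_RFH: "ev e m \<in> RFH sc F H"
proof (cases m)
  case (fields i j k)
  have "ev e m = sc (e ^ k) * mon2 (i, j)" by (simp add: fields ev_def mon2_def mult.assoc)
  thus ?thesis using RFH_scale RFH_mon2 by simp
qed

lemma phi_in_RFH: "phi e x \<in> RFH sc F H"
  unfolding phi_def using coef_fin by (intro RFH_sum) (auto intro: RFH_scale ev_RFH)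

lemma mon_ev_Reta: "mon m - ev e m \<in> R_Reta sc E e"
proof (cases m)
  case (fields i j k)
  define q where "q = monom 1 k - [:e ^ k:]"
  have dq: "degree q \<le> k" unfolding q_def
    by (intro degree_diff_le) (auto simp: degree_monom_le)
  have "peval sc q E = (\<Sum>l\<le>k. sc (coeff q l) * E ^ l)" by (rule peval_le[OF dq])
  also have "\<dots> = (\<Sum>l\<le>k. (if l = k then E ^ l else 0) - (if l = 0 then sc (e ^ k) * E ^ l else 0))"
    by (rule sum.cong) (auto simp: q_def coeff_monom sc_diff left_diff_distrib coeff_pCons split: nat.split)
  also have "\<dots> = E ^ k - sc (e ^ k)"
    by (simp add: sum_subtractf)
  finally have pq: "peval sc q E = E ^ k - sc (e ^ k)" .
  have "poly q e = 0" by (simp add: q_def poly_monom)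
  hence "peval sc q E \<in> R_eta sc E e" unfolding R_eta_def by blast
  hence "(F ^ i * H ^ j) * peval sc q E \<in> R_Reta sc E e"
    using Reta_add1[OF Reta_0] by simp
  moreover have "(F ^ i * H ^ j) * peval sc q E = mon m - ev e m"
    by (simp add: pq fields mon_def ev_def right_diff_distrib mult.assoc sc_comm)
  ultimately show ?thesis by simp
qed

lemma x_phi_Reta: "x - phi e x \<in> R_Reta sc E e"
proof -
  let ?S = "{m. coef x m \<noteq> 0}"
  have "x - phi e x = (\<Sum>m\<in>?S. sc (coef x m) * mon m) - (\<Sum>m\<in>?S. sc (coef x m) * ev e m)"
    by (simp only: phi_def coef_sum)
  also have "\<dots> = (\<Sum>m\<in>?S. sc (coef x m) * (mon m - ev e m))"
    by (simp add: sum_subtractf right_diff_distrib)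
  finally show ?thesis using coef_fin
    by (simp add: Reta_sum Reta_lmult mon_ev_Reta)
qed

lemma eta_phi: "eta_proj sc E F H e x = phi e x"
  unfolding eta_proj_def
proof (rule the1_equality)
  show "\<exists>!v. v \<in> RFH sc F H \<and> x - v \<in> R_Reta sc E e"
  proof (rule ex1I[of _ "phi e x"])
    show "phi e x \<in> RFH sc F H \<and> x - phi e x \<in> R_Reta sc E e"
      using phi_in_RFH x_phi_Reta by blast
  next
    fix v assume v: "v \<in> RFH sc F H \<and> x - v \<in> R_Reta sc E e"
    hence "phi e (x - v) = 0" using phi_Reta by blast
    thus "v = phi e x" using v phi_RFH by (simp add: phi_diff)
  qed
  show "phi e x \<in> RFH sc F H \<and> x - phi e x \<in> R_Reta sc E e"
    using phi_in_RFH x_phi_Reta by blast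
qed


lemma HF: "H * F = F * H - F"
proof -
  have h: "H * F - F * H = - F" using R unfolding is_R_alg_def by blast
  have "H * F = (H * F - F * H) + F * H" by simp
  also have "\<dots> = F * H - F" by (simp only: h) simp
  finally show ?thesis .
qed

lemma EH: "E * H = H * E - E"
proof -
  have h: "H * E - E * H = E" using R unfolding is_R_alg_def by blast
  have "E * H = H * E - (H * E - E * H)" by simp
  also have "\<dots> = H * E - E" by (simp only: h)
  finally show ?thesis .
qed

lemma HFi: "H * F ^ i = F ^ i * H - of_nat i * F ^ i"
proof (induct i)
  case 0 thus ?case by simp
next
  case (Suc i)
  have "H * F ^ Suc i = (H * F ^ i) * F" by (simp only: power_Suc2 mult.assoc)
  also have "\<dots> = F ^ i * (H * F) - of_nat i * F ^ i * F"
    by (simp only: Suc left_diff_distrib mult.assoc)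
  also have "\<dots> = F ^ i * F * H - F ^ i * F - of_nat i * (F ^ i * F)"
    by (simp only: HF right_diff_distrib mult.assoc)
  also have "\<dots> = F ^ Suc i * H - F ^ Suc i - of_nat i * F ^ Suc i"
    by (simp only: power_Suc2)
  also have "\<dots> = F ^ Suc i * H - of_nat (Suc i) * F ^ Suc i"
    by (simp add: algebra_simps)
  finally show ?case .
qed

lemma EkH: "E ^ k * H = H * E ^ k - of_nat k * E ^ k"
proof (induct k)
  case 0 thus ?case by simp
next
  case (Suc k)
  have "E ^ Suc k * H = E ^ k * (E * H)" by (simp only: power_Suc2 mult.assoc)
  also have "\<dots> = (E ^ k * H) * E - E ^ k * E"
    by (simp only: EH right_diff_distrib mult.assoc)
  also have "\<dots> = H * (E ^ k * E) - of_nat k * (E ^ k * E) - E ^ k * E"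
    by (simp only: Suc left_diff_distrib mult.assoc)
  also have "\<dots> = H * E ^ Suc k - of_nat k * E ^ Suc k - E ^ Suc k"
    by (simp only: power_Suc2)
  also have "\<dots> = H * E ^ Suc k - of_nat (Suc k) * E ^ Suc k"
    by (simp add: algebra_simps)
  finally show ?case .
qed

definition kmi :: "nat \<times> nat \<times> nat \<Rightarrow> complex" where
  "kmi m = (case m of (i, j, k) \<Rightarrow> of_nat k - of_nat i)"

lemma nat_left: "x * (of_nat k * y) = of_nat k * (x * y)"
  by (simp only: mult.assoc[symmetric] mult_of_nat_commute[of k x])

lemma H_mon: "H * mon m - mon m * H = sc (kmi m) * mon m"
proof (cases m)
  case (fields i j k)
  have m: "mon m = F ^ i * (H ^ j * E ^ k)" by (simp add: fields mon_def mult.assoc)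
  have s4: "H * E ^ k = E ^ k * H + of_nat k * E ^ k" by (simp add: EkH)
  have "H * mon m = (H * F ^ i) * (H ^ j * E ^ k)" by (simp only: m mult.assoc)
  also have "\<dots> = F ^ i * (H * H ^ j * E ^ k) - of_nat i * mon m"
    by (simp only: HFi left_diff_distrib m mult.assoc)
  also have "H * H ^ j * E ^ k = H ^ j * (H * E ^ k)"
    by (simp only: mult.assoc[symmetric] power_commutes)
  also have "F ^ i * (H ^ j * (H * E ^ k)) = mon m * H + of_nat k * mon m"
    by (simp only: s4 m distrib_left mult.assoc nat_left)
  finally have "H * mon m = mon m * H + of_nat k * mon m - of_nat i * mon m" .
  hence "H * mon m - mon m * H = of_nat k * mon m - of_nat i * mon m"
    by (simp add: algebra_simps)
  thus ?thesis by (simp add: kmi_def fields sc_diff sc_of_nat left_diff_distrib)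
qed

lemma center_coef:
  assumes u: "u \<in> center" and c: "coef u m \<noteq> 0" shows "kmi m = 0"
proof -
  let ?S = "{m. coef u m \<noteq> 0}"
  have "0 = H * u - u * H" using u by (simp add: center_def)
  also have "\<dots> = H * (\<Sum>m\<in>?S. sc (coef u m) * mon m) - (\<Sum>m\<in>?S. sc (coef u m) * mon m) * H"
    by (simp only: coef_sum)
  also have "\<dots> = (\<Sum>m\<in>?S. sc (coef u m) * (H * mon m - mon m * H))"
    by (simp only: sum_distrib_left sum_distrib_right sum_subtractf right_diff_distrib sc_left mult.assoc)
  also have "\<dots> = (\<Sum>m\<in>?S. sc (coef u m * kmi m) * mon m)"
    by (simp add: H_mon sc_mult mult.assoc)
  finally have eq: "0 = (\<Sum>m\<in>?S. sc (coef u m * kmi m) * mon m)" .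
  have "coef 0 = (\<lambda>m. coef u m * kmi m)"
    by (rule coef_unique[OF coef_fin _ eq]) auto
  hence "(\<lambda>m. coef u m * kmi m) = (\<lambda>m. 0)" by (simp add: coef_zero)
  hence "coef u m * kmi m = 0" by (rule fun_cong)
  thus ?thesis using c by simp
qed

lemma kmi0: "kmi m = 0 \<Longrightarrow> \<exists>i j. m = (i, j, i)"
  by (cases m) (auto simp: kmi_def)

lemma phi_center_zero:
  assumes u: "u \<in> center" and p: "phi e u = 0" and e: "e \<noteq> 0" shows "u = 0"
proof -
  let ?S = "{m. coef u m \<noteq> 0}"
  define g where "g = (\<lambda>m::nat \<times> nat \<times> nat. case m of (i, j, k) \<Rightarrow> (i, j, 0::nat))"
  define d where "d = (\<lambda>m::nat \<times> nat \<times> nat. case m of (i, j, k) \<Rightarrow>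
      if k = 0 then coef u (i, j, i) * e ^ i else 0)"
  have form: "\<exists>i j. m = (i, j, i)" if "m \<in> ?S" for m
    using that center_coef[OF u] kmi0 by blast
  have inj: "inj_on g ?S"
  proof (rule inj_onI)
    fix x y assume hx: "x \<in> ?S" and hy: "y \<in> ?S" and gxy: "g x = g y"
    obtain i j where x: "x = (i, j, i)" using form[OF hx] by blast
    obtain i' j' where y: "y = (i', j', i')" using form[OF hy] by blast
    show "x = y" using gxy by (simp add: x y g_def)
  qed
  have fgS: "finite (g ` ?S)" using coef_fin by simp
  have sub: "{m. d m \<noteq> 0} \<subseteq> g ` ?S"
  proof
    fix m assume "m \<in> {m. d m \<noteq> 0}"
    then obtain i j where m: "m = (i, j, 0)" and "coef u (i, j, i) \<noteq> 0"
      by (cases m) (auto simp: d_def split: if_splits)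
    thus "m \<in> g ` ?S" by (auto simp: g_def intro!: image_eqI[of _ _ "(i, j, i)"])
  qed
  have "phi e u = (\<Sum>m\<in>?S. sc (coef u m) * ev e m)" by (simp add: phi_def)
  also have "\<dots> = (\<Sum>m\<in>?S. sc (d (g m)) * mon (g m))"
  proof (rule sum.cong)
    fix m assume "m \<in> ?S"
    then obtain i j where m: "m = (i, j, i)" using form by blast
    show "sc (coef u m) * ev e m = sc (d (g m)) * mon (g m)"
      by (simp add: m g_def d_def ev_def mon_def sc_mult mult.assoc)
  qed simp
  also have "\<dots> = (\<Sum>m\<in>g ` ?S. sc (d m) * mon m)"
    by (simp add: sum.reindex[OF inj])
  finally have eq: "phi e u = (\<Sum>m\<in>g ` ?S. sc (d m) * mon m)" .
  have "coef (phi e u) = d" by (rule coef_unique[OF fgS sub eq])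
  hence d0: "d = (\<lambda>m. 0)" using p coef_zero by simp
  have "?S = {}"
  proof (rule ccontr)
    assume "?S \<noteq> {}"
    then obtain m where "m \<in> ?S" by blast
    moreover then obtain i j where "m = (i, j, i)" using form by blast
    ultimately have "d (i, j, 0) \<noteq> 0" using e by (simp add: d_def)
    thus False using d0 by simp
  qed
  hence "(\<Sum>m\<in>?S. sc (coef u m) * mon m) = 0" by (simp only: sum.empty)
  thus ?thesis by (simp only: coef_sum)
qed

lemma RFH_lmult_gen:
  assumes g: "\<And>m. g * mon2 m \<in> RFH sc F H" and v: "v \<in> RFH sc F H"
  shows "g * v \<in> RFH sc F H"
proof -
  obtain S d where "finite S" "v = (\<Sum>m\<in>S. sc (d m) * mon2 m)" using RFH_rep v by blast
  moreover have "g * (\<Sum>m\<in>S. sc (d m) * mon2 m) = (\<Sum>m\<in>S. sc (d m) * (g * mon2 m))"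
    by (simp only: sum_distrib_left sc_left)
  ultimately show ?thesis using g by (auto intro!: RFH_sum RFH_scale)
qed

lemma RFH_F: "v \<in> RFH sc F H \<Longrightarrow> F * v \<in> RFH sc F H"
proof (rule RFH_lmult_gen)
  fix m :: "nat \<times> nat"
  obtain i j where m: "m = (i, j)" by (cases m)
  have "F * mon2 m = mon2 (Suc i, j)" by (simp add: m mon2_def mult.assoc)
  thus "F * mon2 m \<in> RFH sc F H" using RFH_mon2 by simp
qed

lemma RFH_H: "v \<in> RFH sc F H \<Longrightarrow> H * v \<in> RFH sc F H"
proof (rule RFH_lmult_gen)
  fix m :: "nat \<times> nat"
  obtain i j where m: "m = (i, j)" by (cases m)
  have "H * mon2 m = (H * F ^ i) * H ^ j" by (simp only: m mon2_def split mult.assoc)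
  also have "\<dots> = F ^ i * (H * H ^ j) - of_nat i * (F ^ i * H ^ j)"
    by (simp only: HFi left_diff_distrib mult.assoc)
  also have "\<dots> = mon2 (i, Suc j) - of_nat i * mon2 (i, j)"
    by (simp only: mon2_def split power_Suc)
  also have "\<dots> = mon2 (i, Suc j) + sc (- of_nat i) * mon2 (i, j)"
    by (simp add: sc_minus sc_of_nat)
  finally have "H * mon2 m = mon2 (i, Suc j) + sc (- of_nat i) * mon2 (i, j)" .
  thus "H * mon2 m \<in> RFH sc F H" using RFH_mon2 RFH_add RFH_scale by simp
qed

lemma RFH_mult:
  assumes v: "v \<in> RFH sc F H" and w: "w \<in> RFH sc F H" shows "v * w \<in> RFH sc F H"
proof -
  have Hb: "H ^ b * x \<in> RFH sc F H" if "x \<in> RFH sc F H" for b x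
    using that by (induct b) (simp_all add: mult.assoc RFH_H)
  have Fa: "F ^ a * x \<in> RFH sc F H" if "x \<in> RFH sc F H" for a x
    using that by (induct a) (simp_all add: mult.assoc RFH_F)
  have "mon2 m * w \<in> RFH sc F H" for m
    by (cases m) (simp add: mon2_def mult.assoc Fa Hb w)
  obtain S d where "finite S" "v = (\<Sum>m\<in>S. sc (d m) * mon2 m)" using RFH_rep v by blast
  moreover have "(\<Sum>m\<in>S. sc (d m) * mon2 m) * w = (\<Sum>m\<in>S. sc (d m) * (mon2 m * w))"
    by (simp add: sum_distrib_right mult.assoc)
  ultimately show ?thesis using \<open>\<And>m. mon2 m * w \<in> RFH sc F H\<close> by (auto intro!: RFH_sum RFH_scale)
qed


lemma center_diff: "z \<in> center \<Longrightarrow> w \<in> center \<Longrightarrow> z - w \<in> center"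
  by (simp add: center_def left_diff_distrib right_diff_distrib)

lemma phi_mult_center:
  assumes z: "z \<in> center" and w: "w \<in> center"
  shows "phi e (z * w) = phi e z * phi e w"
proof -
  have wc: "w * x = x * w" for x using w by (simp add: center_def)
  have "w * (z - phi e z) + phi e z * (w - phi e w)
      = (w * z - w * phi e z) + (phi e z * w - phi e z * phi e w)"
    by (simp only: right_diff_distrib)
  also have "\<dots> = (z * w - phi e z * w) + (phi e z * w - phi e z * phi e w)"
    by (simp only: wc[of z] wc[of "phi e z"])
  also have "\<dots> = z * w - phi e z * phi e w" by simp
  finally have eq: "z * w - phi e z * phi e w = w * (z - phi e z) + phi e z * (w - phi e w)" by simp
  have "w * (z - phi e z) + phi e z * (w - phi e w) \<in> R_Reta sc E e"
    by (intro Reta_add Reta_lmult x_phi_Reta)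
  hence "z * w - phi e z * phi e w \<in> R_Reta sc E e" by (simp only: eq)
  hence "phi e (z * w - phi e z * phi e w) = 0" by (rule phi_Reta)
  hence "phi e (z * w) = phi e (phi e z * phi e w)" by (simp add: phi_diff)
  also have "\<dots> = phi e z * phi e w" by (intro phi_RFH RFH_mult phi_in_RFH)
  finally show ?thesis .
qed

end

theorem mainTheorem15:
  fixes sc :: "complex \<Rightarrow> 'a::ring_1"
    and f :: "complex poly"
    and E F H :: 'a
    and e :: complex
  assumes R: "is_R_alg sc f E F H"
    and e_nz: "e \<noteq> 0"
  shows "eta_proj sc E F H e ` center \<subseteq> RFH sc F H \<and>
         eta_proj sc E F H e 1 = 1 \<and>
         (\<forall>z\<in>center. \<forall>w\<in>center.
             eta_proj sc E F H e (z + w) = eta_proj sc E F H e z + eta_proj sc E F H e w) \<and>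
         (\<forall>c. \<forall>z\<in>center. eta_proj sc E F H e (sc c * z) = sc c * eta_proj sc E F H e z) \<and>
         (\<forall>z\<in>center. \<forall>w\<in>center.
             eta_proj sc E F H e (z * w) = eta_proj sc E F H e z * eta_proj sc E F H e w) \<and>
         inj_on (eta_proj sc E F H e) center"
proof -
  interpret Ralg sc f E F H by (rule Ralg.intro[OF R])
  have one: "phi e 1 = 1"
  proof -
    have "(1::'a) = mon (0, 0, 0)" by (simp add: mon_def)
    hence "phi e 1 = ev e (0, 0, 0)" using phi_mon[of e "(0, 0, 0)"] by (simp only:)
    thus ?thesis by (simp add: ev_def)
  qed
  have inj: "inj_on (phi e) center"
  proof (rule inj_onI)
    fix z w assume z: "z \<in> center" and w: "w \<in> center" and eq: "phi e z = phi e w"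
    have "phi e (z - w) = 0" using eq by (simp add: phi_diff)
    hence "z - w = 0" using phi_center_zero[OF center_diff[OF z w] _ e_nz] by blast
    thus "z = w" by simp
  qed
  have ep: "eta_proj sc E F H e = phi e" by (rule ext) (rule eta_phi)
  show ?thesis unfolding ep
  proof (intro conjI)
    show "phi e ` center \<subseteq> RFH sc F H" using phi_in_RFH by blast
    show "phi e 1 = 1" by (rule one)
    show "\<forall>z\<in>center. \<forall>w\<in>center. phi e (z + w) = phi e z + phi e w"
      using phi_add by blast
    show "\<forall>c. \<forall>z\<in>center. phi e (sc c * z) = sc c * phi e z"
      using phi_scale by blast
    show "\<forall>z\<in>center. \<forall>w\<in>center. phi e (z * w) = phi e z * phi e w"
      using phi_mult_center by blast
    show "inj_on (phi e) center" by (rule inj)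
  qed
qed

end
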